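(* Let $d\geq 2$ and let $\mathcal{CP}$ be a $d$-dimensional cube packing with $2^d-\delta$ cubes, with representatives $x^1,\dots,x^{2^d-\delta}\in\{0,1,2,3\}^d$. Then for every coordinate $i\in\{1,\dots,d\}$ and every $j\in\{0,1,2,3\}$, the induced cube packing on layer $j$ along coordinate $i$ has at least $2^{d-1}-\delta$ cubes; that is, the number of indices $k$ with $x^k_i\in\{j, j+1 \bmod 4\}$ is at least $2^{d-1}-\delta$.
   Context: A $d$-dimensional cube packing is a $4\mathbb{Z}^d$-invariant set of pairwise disjoint translates $z+[0,2[^d$, $z\in\mathbb{Z}^d$; it is described by the set of representatives $x\in\{0,1,2,3\}^d$ of the $4\mathbb{Z}^d$-orbits of its cubes, two cubes with representatives $x,x'$ being disjoint iff $|x_i-x'_i|=2$ for some coordinate $i$. Its number of cubes is the number of orbits. Given a coordinate $i$ and $j\in\{0,1,2,3\}$, the induced cube packing on layer $j$ is the $(d-1)$-dimensional cube packing with representatives $(x^k_1,\dots,x^k_{i-1},x^k_{i+1},\dots,x^k_d)$ for all representatives $x^k$ with $x^k_i\equiv j$ or $j+1 \pmod 4$. *)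

theory Defs
  imports Main
begin

text \<open>A d-dimensional cube packing, given by its set S of representatives
  x in {0,1,2,3}^d (lists of length d, coordinates indexed 0..d-1) of the
  4Z^d-orbits of its cubes; distinct cubes must be disjoint, i.e. differ by 2 in
  some coordinate.\<close>
definition cube_packing :: "nat \<Rightarrow> nat list set \<Rightarrow> bool" where
  "cube_packing d S \<longleftrightarrow>
     (\<forall>x\<in>S. length x = d \<and> (\<forall>i<d. x ! i < 4)) \<and>
     (\<forall>x\<in>S. \<forall>y\<in>S. x \<noteq> y \<longrightarrow> (\<exists>i<d. \<bar>int (x ! i) - int (y ! i)\<bar> = 2))"

definition layer_reps :: "nat list set \<Rightarrow> nat \<Rightarrow> nat \<Rightarrow> nat list set" where
  "layer_reps S i j = {x \<in> S. x ! i = j mod 4 \<or> x ! i = (j + 1) mod 4}"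

end

theory Submission
  imports Defs
begin

definition bitf :: "nat \<Rightarrow> nat" where "bitf v = ((v + 1) div 2) mod 2"

lemma filter_len: "i < d \<Longrightarrow> length (filter (\<lambda>k. k \<noteq> i) [0..<d]) = d - 1"
proof (induction d)
  case 0 then show ?case by simp
next
  case (Suc d)
  show ?case
  proof (cases "i = d")
    case True
    then have "filter (\<lambda>k. k \<noteq> i) [0..<d] = [0..<d]" by (simp add: filter_id_conv)
    then show ?thesis using True by simp
  next
    case False then show ?thesis using Suc by simp
  qed
qed

lemma mod4_aux: "(r::nat) < 4 \<Longrightarrow> \<bar>int r - int ((r + 1) mod 4)\<bar> \<noteq> 2"
proof -
  assume "r < 4"
  then have "r = 0 \<or> r = 1 \<or> r = 2 \<or> r = 3" by linarith
  then show ?thesis by (elim disjE) simp_all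
qed

lemma mod4_nd: "\<bar>int (j mod 4) - int (Suc j mod 4)\<bar> \<noteq> 2"
proof -
  have "Suc j mod 4 = (j mod 4 + 1) mod 4" by (simp add: mod_Suc_eq)
  then show ?thesis using mod4_aux[of "j mod 4"] by simp
qed

lemma mod4_nd': "\<bar>int (Suc j mod 4) - int (j mod 4)\<bar> \<noteq> 2"
  using mod4_nd[of j] by linarith

lemma four_cases: "(v::nat) < 4 \<Longrightarrow> j < 4 \<Longrightarrow> v = j \<or> v = Suc j mod 4 \<or> v = Suc (Suc j) mod 4 \<or> v = (3 + j) mod 4"
proof -
  assume a: "v < 4" "j < 4"
  have "j = 0 \<or> j = 1 \<or> j = 2 \<or> j = 3" using a by linarith
  moreover have "v = 0 \<or> v = 1 \<or> v = 2 \<or> v = 3" using a by linarith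
  ultimately show ?thesis by (elim disjE) simp_all
qed

lemma bitf_ne: "(a::nat) < 4 \<Longrightarrow> b < 4 \<Longrightarrow> \<bar>int a - int b\<bar> = 2 \<Longrightarrow> bitf a \<noteq> bitf b"
proof -
  assume h: "a < 4" "b < 4" "\<bar>int a - int b\<bar> = 2"
  have "a = 0 \<or> a = 1 \<or> a = 2 \<or> a = 3" using h by linarith
  moreover have "b = 0 \<or> b = 1 \<or> b = 2 \<or> b = 3" using h by linarith
  ultimately show ?thesis using h(3) by (elim disjE) (simp_all add: bitf_def)
qed

lemma layer_le:
  assumes cp: "cube_packing d S" and i: "i < d"
  shows "card (layer_reps S i j) \<le> 2 ^ (d - 1)"
proof -
  define g where "g x = map (\<lambda>k. bitf (x ! k)) (filter (\<lambda>k. k \<noteq> i) [0..<d])" for x :: "nat list"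
  let ?L = "layer_reps S i j"
  have inj: "inj_on g ?L"
  proof (rule inj_onI)
    fix x y assume x: "x \<in> ?L" and y: "y \<in> ?L" and e: "g x = g y"
    show "x = y"
    proof (rule ccontr)
      assume "x \<noteq> y"
      with x y cp obtain k where k: "k < d" "\<bar>int (x ! k) - int (y ! k)\<bar> = 2"
        unfolding cube_packing_def layer_reps_def by blast
      have "k \<noteq> i"
      proof
        assume "k = i"
        have "x ! i = j mod 4 \<or> x ! i = Suc j mod 4" "y ! i = j mod 4 \<or> y ! i = Suc j mod 4"
          using x y unfolding layer_reps_def by auto
        then show False using k(2) \<open>k = i\<close> mod4_nd[of j] mod4_nd'[of j] by (elim disjE) simp_all
      qed
      with e k have "bitf (x ! k) = bitf (y ! k)" unfolding g_def
        by (auto simp: map_eq_conv)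
      moreover have "x ! k < 4" "y ! k < 4" using x y cp k
        unfolding cube_packing_def layer_reps_def by auto
      ultimately show False using k(2) bitf_ne by blast
    qed
  qed
  have sub: "g ` ?L \<subseteq> {xs. set xs \<subseteq> {0,1} \<and> length xs = d - 1}"
    unfolding g_def using filter_len[OF i] by (auto simp: bitf_def)
  have "card ?L = card (g ` ?L)" using card_image[OF inj] by simp
  also have "\<dots> \<le> card {xs. set xs \<subseteq> {0::nat,1} \<and> length xs = d - 1}"
    by (rule card_mono[OF _ sub]) (simp add: finite_lists_length_eq)
  also have "\<dots> = 2 ^ (d - 1)" by (simp add: card_lists_length_eq numeral_2_eq_2)
  finally show ?thesis .
qed

theorem lemma3:
  fixes d :: nat and S :: "nat list set" and \<delta> :: int
  assumes "d \<ge> 2"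
    and "cube_packing d S"
    and "int (card S) = 2 ^ d - \<delta>"
  shows "\<forall>i<d. \<forall>j<4. int (card (layer_reps S i j)) \<ge> 2 ^ (d - 1) - \<delta>"
proof (intro allI impI)
  fix i j :: nat assume i: "i < d" and j: "j < 4"
  have fin: "finite S"
  proof (rule finite_subset)
    show "S \<subseteq> {xs. set xs \<subseteq> {0..<4::nat} \<and> length xs = d}"
      using assms(2) unfolding cube_packing_def by (auto simp: in_set_conv_nth)
    show "finite {xs. set xs \<subseteq> {0..<4::nat} \<and> length xs = d}"
      by (simp add: finite_lists_length_eq)
  qed
  have un: "S = layer_reps S i j \<union> layer_reps S i (j + 2)"
  proof
    show "layer_reps S i j \<union> layer_reps S i (j + 2) \<subseteq> S" unfolding layer_reps_def by auto
    show "S \<subseteq> layer_reps S i j \<union> layer_reps S i (j + 2)"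
    proof
      fix x assume x: "x \<in> S"
      then have "x ! i < 4" using assms(2) i unfolding cube_packing_def by auto
      from four_cases[OF this j] j x show "x \<in> layer_reps S i j \<union> layer_reps S i (j + 2)"
        unfolding layer_reps_def by auto
    qed
  qed
  have dis: "layer_reps S i j \<inter> layer_reps S i (j + 2) = {}"
  proof -
    have "j = 0 \<or> j = 1 \<or> j = 2 \<or> j = 3" using j by linarith
    then show ?thesis unfolding layer_reps_def by (elim disjE) auto
  qed
  have "card S = card (layer_reps S i j) + card (layer_reps S i (j + 2))"
  proof -
    have f1: "finite (layer_reps S i j)" "finite (layer_reps S i (j + 2))"
      using fin unfolding layer_reps_def by auto
    have "card (layer_reps S i j \<union> layer_reps S i (j + 2)) = card (layer_reps S i j) + card (layer_reps S i (j + 2))"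
      by (rule card_Un_disjoint[OF f1 dis])
    then show ?thesis using un by simp
  qed
  moreover have "int (card (layer_reps S i (j + 2))) \<le> 2 ^ (d - 1)"
  proof -
    have "card (layer_reps S i (j + 2)) \<le> 2 ^ (d - 1)" by (rule layer_le[OF assms(2) i])
    then have "int (card (layer_reps S i (j + 2))) \<le> int (2 ^ (d - 1))" by linarith
    then show ?thesis by simp
  qed
  moreover have "(2::int) ^ d = 2 * 2 ^ (d - 1)"
  proof -
    obtain m where "d = Suc m" using assms(1) by (cases d) auto
    then show ?thesis by simp
  qed
  ultimately show "int (card (layer_reps S i j)) \<ge> 2 ^ (d - 1) - \<delta>"
  proof -
    assume a: "card S = card (layer_reps S i j) + card (layer_reps S i (j + 2))"
      "int (card (layer_reps S i (j + 2))) \<le> 2 ^ (d - 1)" "(2::int) ^ d = 2 * 2 ^ (d - 1)"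
    have "int (card S) = int (card (layer_reps S i j)) + int (card (layer_reps S i (j + 2)))"
      using a(1) by simp
    then show ?thesis using a(2,3) assms(3) by linarith
  qed
qed

end
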